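(* Given a positive integer $k$ and an integer $q$ with $|q|\le 2^k$, there is a connected finite simple graph $G$ with $\phi_3(G)=k$ and $I(G;-1)=q$.
   Context: For a finite simple graph $G$, the independence polynomial is $I(G;x)=\sum_{k\ge 0} i_k(G)x^k$, where $i_k(G)$ is the number of independent sets of $G$ of size $k$ (with $i_0(G)=1$, counting the empty set). A $\tilde{3}$-cycle is a cycle whose length is divisible by $3$. A graph is called ternary if it contains no induced $\tilde{3}$-cycle. A set $D\subseteq V(G)$ is a $\tilde{3}$-decycling set of $G$ if $G-D$ is ternary. The ternary decycling number $\phi_3(G)$ is the minimum size of a $\tilde{3}$-decycling set of $G$. *)

theory Defs
  imports Main
begin

definition simple_graph :: "'a set \<Rightarrow> ('a \<Rightarrow> 'a \<Rightarrow> bool) \<Rightarrow> bool" where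
  "simple_graph V E \<longleftrightarrow> finite V \<and> (\<forall>x y. E x y \<longrightarrow> x \<in> V \<and> y \<in> V)
     \<and> (\<forall>x y. E x y \<longrightarrow> E y x) \<and> (\<forall>x. \<not> E x x)"

definition connected_graph :: "'a set \<Rightarrow> ('a \<Rightarrow> 'a \<Rightarrow> bool) \<Rightarrow> bool" where
  "connected_graph V E \<longleftrightarrow> V \<noteq> {} \<and>
     (\<forall>x\<in>V. \<forall>y\<in>V. (x, y) \<in> {(u, v). u \<in> V \<and> v \<in> V \<and> E u v}\<^sup>*)"

definition independent_set :: "'a set \<Rightarrow> ('a \<Rightarrow> 'a \<Rightarrow> bool) \<Rightarrow> 'a set \<Rightarrow> bool" where
  "independent_set V E S \<longleftrightarrow> S \<subseteq> V \<and> (\<forall>x\<in>S. \<forall>y\<in>S. \<not> E x y)"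

definition indep_poly :: "'a set \<Rightarrow> ('a \<Rightarrow> 'a \<Rightarrow> bool) \<Rightarrow> 'b::comm_ring_1 \<Rightarrow> 'b" where
  "indep_poly V E x = (\<Sum>S\<in>{S. independent_set V E S}. x ^ card S)"

definition induced_cycle :: "'a set \<Rightarrow> ('a \<Rightarrow> 'a \<Rightarrow> bool) \<Rightarrow> 'a list \<Rightarrow> bool" where
  "induced_cycle V E vs \<longleftrightarrow> length vs \<ge> 3 \<and> distinct vs \<and> set vs \<subseteq> V \<and>
     (\<forall>i<length vs. \<forall>j<length vs.
        E (vs ! i) (vs ! j) \<longleftrightarrow> (j = Suc i mod length vs \<or> i = Suc j mod length vs))"

definition ternary :: "'a set \<Rightarrow> ('a \<Rightarrow> 'a \<Rightarrow> bool) \<Rightarrow> bool" where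
  "ternary V E \<longleftrightarrow> \<not> (\<exists>vs. induced_cycle V E vs \<and> 3 dvd length vs)"

definition decycling_set3 :: "'a set \<Rightarrow> ('a \<Rightarrow> 'a \<Rightarrow> bool) \<Rightarrow> 'a set \<Rightarrow> bool" where
  "decycling_set3 V E D \<longleftrightarrow> D \<subseteq> V \<and> ternary (V - D) E"

definition phi3 :: "'a set \<Rightarrow> ('a \<Rightarrow> 'a \<Rightarrow> bool) \<Rightarrow> nat" where
  "phi3 V E = (LEAST k. \<exists>D. decycling_set3 V E D \<and> card D = k)"

end

theory Submission
  imports Defs
begin

abbreviation I :: "nat set \<Rightarrow> (nat \<Rightarrow> nat \<Rightarrow> bool) \<Rightarrow> int" where
  "I V E \<equiv> indep_poly V E (-1::int)"

lemma finite_indep: "finite V \<Longrightarrow> finite {S. independent_set V E S}"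
  by (rule finite_subset[of _ "Pow V"]) (auto simp: independent_set_def)

lemma indep_empty: "I {} E = 1"
proof -
  have "{S. independent_set {} E S} = {{}}" by (auto simp: independent_set_def)
  thus ?thesis by (simp add: indep_poly_def)
qed

lemma indep_cong:
  assumes "\<forall>x\<in>V. \<forall>y\<in>V. E x y = F x y"
  shows "I V E = I V F"
proof -
  have "{S. independent_set V E S} = {S. independent_set V F S}"
    using assms by (auto simp: independent_set_def) blast+
  thus ?thesis by (simp add: indep_poly_def)
qed

lemma indep_del:
  assumes fin: "finite V" and v: "v \<in> V" and irr: "\<forall>x. \<not> E x x" and sym: "\<forall>x y. E x y \<longrightarrow> E y x"
  shows "I V E = I (V - {v}) E - I {u\<in>V. u \<noteq> v \<and> \<not> E v u} E"
proof -
  define S0 where "S0 = {S. independent_set (V - {v}) E S}"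
  define S1 where "S1 = {S. independent_set {u\<in>V. u \<noteq> v \<and> \<not> E v u} E S}"
  have eq: "{S. independent_set V E S} = S0 \<union> insert v ` S1"
  proof
    show "{S. independent_set V E S} \<subseteq> S0 \<union> insert v ` S1"
    proof
      fix S assume "S \<in> {S. independent_set V E S}"
      hence S: "independent_set V E S" by simp
      show "S \<in> S0 \<union> insert v ` S1"
      proof (cases "v \<in> S")
        case False thus ?thesis using S by (auto simp: S0_def independent_set_def)
      next
        case True
        have "S - {v} \<in> S1" using S True by (auto simp: S1_def independent_set_def)
        moreover have "S = insert v (S - {v})" using True by auto
        ultimately show ?thesis by blast
      qed
    qed
  next
    show "S0 \<union> insert v ` S1 \<subseteq> {S. independent_set V E S}"
      using v irr sym by (auto simp: S0_def S1_def independent_set_def)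
  qed
  have f0: "finite S0" unfolding S0_def using fin by (intro finite_indep) auto
  have f1: "finite S1" unfolding S1_def using fin by (intro finite_indep) auto
  have disj: "S0 \<inter> insert v ` S1 = {}" by (auto simp: S0_def independent_set_def)
  have inj: "inj_on (insert v) S1" 
    by (rule inj_onI) (auto simp: S1_def independent_set_def)
  have "I V E = (\<Sum>S\<in>S0. (-1::int) ^ card S) + (\<Sum>S\<in>insert v ` S1. (-1::int) ^ card S)"
    unfolding indep_poly_def eq using f0 f1 disj by (simp add: sum.union_disjoint)
  also have "(\<Sum>S\<in>insert v ` S1. (-1::int) ^ card S) = (\<Sum>S\<in>S1. (-1::int) ^ card (insert v S))"
    using inj by (simp add: sum.reindex)
  also have "\<dots> = (\<Sum>S\<in>S1. - ((-1::int) ^ card S))"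
  proof (rule sum.cong)
    fix S assume "S \<in> S1"
    hence "finite S" "v \<notin> S" using fin by (auto simp: S1_def independent_set_def intro: finite_subset)
    thus "(-1::int) ^ card (insert v S) = - ((-1) ^ card S)" by simp
  qed simp
  finally show ?thesis by (simp add: S0_def S1_def indep_poly_def sum_negf)
qed

lemma indep_prod:
  assumes fA: "finite A" and fB: "finite B" and d: "A \<inter> B = {}"
    and no: "\<forall>x\<in>A. \<forall>y\<in>B. \<not> E x y \<and> \<not> E y x"
  shows "I (A \<union> B) E = I A E * I B E"
proof -
  define SA where "SA = {S. independent_set A E S}"
  define SB where "SB = {S. independent_set B E S}"
  have fa: "finite SA" "finite SB" unfolding SA_def SB_def using fA fB by (auto intro: finite_indep)
  have eq: "{S. independent_set (A \<union> B) E S} = (\<lambda>(S1,S2). S1 \<union> S2) ` (SA \<times> SB)"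
  proof
    show "{S. independent_set (A \<union> B) E S} \<subseteq> (\<lambda>(S1,S2). S1 \<union> S2) ` (SA \<times> SB)"
    proof
      fix S assume "S \<in> {S. independent_set (A \<union> B) E S}"
      hence S: "independent_set (A \<union> B) E S" by simp
      show "S \<in> (\<lambda>(S1,S2). S1 \<union> S2) ` (SA \<times> SB)"
      proof (rule image_eqI[where x="(S \<inter> A, S \<inter> B)"])
        show "S = (\<lambda>(S1,S2). S1 \<union> S2) (S \<inter> A, S \<inter> B)" using S by (auto simp: independent_set_def)
        have "independent_set A E (S \<inter> A)" "independent_set B E (S \<inter> B)"
          using S by (auto simp: independent_set_def)
        thus "(S \<inter> A, S \<inter> B) \<in> SA \<times> SB" by (simp add: SA_def SB_def)
      qed
    qed
  next
    show "(\<lambda>(S1,S2). S1 \<union> S2) ` (SA \<times> SB) \<subseteq> {S. independent_set (A \<union> B) E S}"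
    proof clarify
      fix S1 S2 assume "S1 \<in> SA" "S2 \<in> SB"
      then have a: "S1 \<subseteq> A" "S2 \<subseteq> B" "\<forall>x\<in>S1. \<forall>y\<in>S1. \<not>E x y" "\<forall>x\<in>S2. \<forall>y\<in>S2. \<not> E x y"
        by (auto simp: SA_def SB_def independent_set_def)
      show "independent_set (A \<union> B) E (S1 \<union> S2)" unfolding independent_set_def
      proof (intro conjI ballI)
        show "S1 \<union> S2 \<subseteq> A \<union> B" using a by blast
        fix x y assume xy: "x \<in> S1 \<union> S2" "y \<in> S1 \<union> S2"
        show "\<not> E x y"
        proof (cases "x \<in> S1")
          case True thus ?thesis using xy a no by blast
        next
          case False thus ?thesis using xy a no by blast
        qed
      qed
    qed
  qed
  have inj: "inj_on (\<lambda>(S1,S2). S1 \<union> S2) (SA \<times> SB)"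
  proof (rule inj_onI)
    fix z w assume a: "z \<in> SA \<times> SB" "w \<in> SA \<times> SB" "(\<lambda>(S1,S2). S1 \<union> S2) z = (\<lambda>(S1,S2). S1 \<union> S2) w"
    obtain S1 S2 T1 T2 where z: "z = (S1,S2)" and w: "w = (T1,T2)" by (cases z, cases w) auto
    have "S1 = (S1 \<union> S2) \<inter> A" "T1 = (T1 \<union> T2) \<inter> A" "S2 = (S1 \<union> S2) \<inter> B" "T2 = (T1 \<union> T2) \<inter> B"
      using d a(1,2) unfolding z w by (auto simp: SA_def SB_def independent_set_def)
    moreover have "S1 \<union> S2 = T1 \<union> T2" using a(3) unfolding z w by simp
    ultimately show "z = w" unfolding z w by metis
  qed
  have "I (A \<union> B) E = (\<Sum>z\<in>SA \<times> SB. (-1::int) ^ card ((\<lambda>(S1,S2). S1 \<union> S2) z))"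
    unfolding indep_poly_def eq using inj by (simp add: sum.reindex)
  also have "\<dots> = (\<Sum>z\<in>SA \<times> SB. (-1::int) ^ card (fst z) * (-1) ^ card (snd z))"
  proof (rule sum.cong)
    fix z assume zz: "z \<in> SA \<times> SB"
    obtain S1 S2 where z: "z = (S1,S2)" by (cases z) auto
    have "finite S1" "finite S2" "S1 \<inter> S2 = {}" using fA fB d zz unfolding z
      by (auto simp: SA_def SB_def independent_set_def intro: finite_subset)
    thus "(-1::int) ^ card ((\<lambda>(S1,S2). S1 \<union> S2) z) = (-1) ^ card (fst z) * (-1) ^ card (snd z)"
      unfolding z by (simp add: card_Un_disjoint power_add)
  qed simp
  also have "\<dots> = (\<Sum>S1\<in>SA. \<Sum>S2\<in>SB. (-1::int) ^ card S1 * (-1) ^ card S2)"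
    by (simp add: sum.cartesian_product split_def)
  also have "\<dots> = I A E * I B E"
    by (simp add: indep_poly_def SA_def SB_def sum_product)
  finally show ?thesis .
qed


lemma indep_clique:
  assumes fin: "finite B" and irr: "\<forall>x. \<not> E x x" and cl: "\<forall>x\<in>B. \<forall>y\<in>B. x \<noteq> y \<longrightarrow> E x y"
  shows "I B E = 1 - int (card B)"
proof -
  have eq: "{S. independent_set B E S} = insert {} ((\<lambda>x. {x}) ` B)"
  proof
    show "{S. independent_set B E S} \<subseteq> insert {} ((\<lambda>x. {x}) ` B)"
    proof
      fix S assume "S \<in> {S. independent_set B E S}"
      hence S: "S \<subseteq> B" "\<forall>x\<in>S. \<forall>y\<in>S. \<not> E x y" by (auto simp: independent_set_def)
      show "S \<in> insert {} ((\<lambda>x. {x}) ` B)"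
      proof (cases "S = {}")
        case False
        then obtain x where x: "x \<in> S" by auto
        have "S = {x}" using S x cl by blast
        thus ?thesis using x S by auto
      qed simp
    qed
  next
    show "insert {} ((\<lambda>x. {x}) ` B) \<subseteq> {S. independent_set B E S}"
      using irr by (auto simp: independent_set_def)
  qed
  have "I B E = 1 + (\<Sum>S\<in>(\<lambda>x. {x}) ` B. (-1::int) ^ card S)"
    unfolding indep_poly_def eq using fin by (subst sum.insert) auto
  also have "\<dots> = 1 + (\<Sum>x\<in>B. (-1::int))"
    by (subst sum.reindex) (auto intro: inj_onI)
  finally show ?thesis by simp
qed

lemma glue_I:
  assumes fA: "finite A" and fB: "finite B" and d: "A \<inter> B = {}" and p: "p \<in> A" and i: "i \<in> B"
    and irr: "\<forall>x. \<not> E x x" and sym: "\<forall>x y. E x y \<longrightarrow> E y x"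
    and cross: "\<forall>x\<in>A. \<forall>y\<in>B. E x y \<longleftrightarrow> (x = p \<and> y = i)"
  shows "I (A \<union> B) E = I (A - {p}) E * I B E - (I (A - {p}) E - I A E) * I (B - {i}) E"
    and "I (A \<union> B - {p}) E = I (A - {p}) E * I B E"
proof -
  have nx: "\<forall>x\<in>A. \<forall>y\<in>B. x \<noteq> p \<longrightarrow> \<not>E x y \<and> \<not>E y x" using cross sym by metis
  have nx2: "\<forall>x\<in>A. \<forall>y\<in>B. y \<noteq> i \<longrightarrow> \<not>E x y \<and> \<not>E y x" using cross sym by metis
  have e1: "A \<union> B - {p} = (A - {p}) \<union> B" using d i p by auto
  show p2: "I (A \<union> B - {p}) E = I (A - {p}) E * I B E"
    unfolding e1 by (rule indep_prod) (use fA fB d nx in auto)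
  have e2: "{u\<in>A \<union> B. u \<noteq> p \<and> \<not> E p u} = {u\<in>A. u \<noteq> p \<and> \<not> E p u} \<union> (B - {i})"
    using cross p d by auto
  have p3: "I {u\<in>A \<union> B. u \<noteq> p \<and> \<not> E p u} E = I {u\<in>A. u \<noteq> p \<and> \<not> E p u} E * I (B - {i}) E"
    unfolding e2 by (rule indep_prod) (use fA fB d nx nx2 in auto)
  have dA: "I A E = I (A - {p}) E - I {u\<in>A. u \<noteq> p \<and> \<not> E p u} E"
    by (rule indep_del[OF fA p irr sym])
  have dAB: "I (A \<union> B) E = I (A \<union> B - {p}) E - I {u\<in>A \<union> B. u \<noteq> p \<and> \<not> E p u} E"
    by (rule indep_del) (use fA fB p irr sym in auto)
  show "I (A \<union> B) E = I (A - {p}) E * I B E - (I (A - {p}) E - I A E) * I (B - {i}) E"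
    unfolding dAB p2 p3 using dA by simp
qed

definition fo :: "nat set \<Rightarrow> (nat \<Rightarrow> nat \<Rightarrow> bool) \<Rightarrow> bool" where
  "fo W E \<longleftrightarrow> (\<forall>v\<in>W. \<forall>u1\<in>W. \<forall>u2\<in>W. E v u1 \<and> E v u2 \<and> u1 < v \<and> u2 < v \<longrightarrow> u1 = u2)"

lemma fo_no_cycle:
  assumes fo: "fo W E" and ic: "induced_cycle W E vs"
  shows False
proof -
  define n where "n = length vs"
  from ic have n3: "3 \<le> n" and dist: "distinct vs" and sub: "set vs \<subseteq> W"
    and adj: "\<forall>i<n. \<forall>j<n. E (vs!i) (vs!j) \<longleftrightarrow> (j = Suc i mod n \<or> i = Suc j mod n)"
    by (auto simp: induced_cycle_def n_def)
  have ne: "set vs \<noteq> {}" using n3 n_def by auto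
  obtain i where i: "i < n" "vs!i = Max (set vs)"
    using Max_in[OF finite_set ne] by (auto simp: in_set_conv_nth n_def)
  define j1 where "j1 = (if i = n - 1 then 0 else Suc i)"
  define j2 where "j2 = (if i = 0 then n - 1 else i - 1)"
  have j1: "j1 < n" "j1 = Suc i mod n"
  proof -
    show "j1 < n" using i n3 by (auto simp: j1_def)
    show "j1 = Suc i mod n"
    proof (cases "i = n - 1")
      case True hence "Suc i = n" using n3 by simp
      thus ?thesis using True by (simp add: j1_def)
    next
      case False hence "Suc i < n" using i by simp
      thus ?thesis using False by (simp add: j1_def)
    qed
  qed
  have j2: "j2 < n" "i = Suc j2 mod n"
  proof -
    show "j2 < n" using i n3 by (auto simp: j2_def)
    show "i = Suc j2 mod n"
    proof (cases "i = 0")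
      case True hence "Suc j2 = n" using n3 by (simp add: j2_def)
      thus ?thesis using True by simp
    next
      case False hence "Suc j2 = i" by (simp add: j2_def)
      thus ?thesis using i by simp
    qed
  qed
  have ne12: "j1 \<noteq> j2" "j1 \<noteq> i" "j2 \<noteq> i" using i n3 by (auto simp: j1_def j2_def)
  have e1: "E (vs!i) (vs!j1)" using adj i j1 by blast
  have e2: "E (vs!i) (vs!j2)" using adj i j2 by blast
  have l: "j1 < length vs" "j2 < length vs" "i < length vs" using j1(1) j2(1) i(1) n_def by auto
  have v12: "vs!j1 \<noteq> vs!j2" "vs!j1 \<noteq> vs!i" "vs!j2 \<noteq> vs!i"
    using nth_eq_iff_index_eq[OF dist l(1) l(2)] nth_eq_iff_index_eq[OF dist l(1) l(3)]
      nth_eq_iff_index_eq[OF dist l(2) l(3)] ne12 by auto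
  have "vs!j1 \<le> vs!i" "vs!j2 \<le> vs!i" using i j1 j2 by (auto simp: n_def)
  hence lt: "vs!j1 < vs!i" "vs!j2 < vs!i" using v12 by auto
  have mem: "vs!i \<in> W" "vs!j1 \<in> W" "vs!j2 \<in> W" using sub nth_mem[OF l(3)] nth_mem[OF l(1)] nth_mem[OF l(2)] by blast+
  show False using fo mem e1 e2 lt v12 unfolding fo_def by blast
qed

lemma tri_cycle:
  assumes "a \<noteq> b" "b \<noteq> c" "a \<noteq> c" "a \<in> W" "b \<in> W" "c \<in> W" "E a b" "E b c" "E a c"
    and irr: "\<forall>x. \<not> E x x" and sym: "\<forall>x y. E x y \<longrightarrow> E y x"
  shows "induced_cycle W E [a,b,c]"
proof -
  have "\<forall>i<3. \<forall>j<3. E ([a,b,c]!i) ([a,b,c]!j) \<longleftrightarrow> (j = Suc i mod 3 \<or> i = Suc j mod 3)"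
  proof (intro allI impI)
    fix i j :: nat assume "i < 3" "j < 3"
    hence ij: "i = 0 \<or> i = 1 \<or> i = 2" "j = 0 \<or> j = 1 \<or> j = 2" by auto
    have f: "E b a" "E c b" "E c a" "\<not>E a a" "\<not>E b b" "\<not>E c c" using assms by blast+
    from ij show "E ([a,b,c]!i) ([a,b,c]!j) \<longleftrightarrow> (j = Suc i mod 3 \<or> i = Suc j mod 3)"
      by (elim disjE) (simp_all add: f assms(7-9))
  qed
  thus ?thesis using assms by (simp add: induced_cycle_def)
qed


definition is_tri :: "nat set \<Rightarrow> (nat \<Rightarrow> nat \<Rightarrow> bool) \<Rightarrow> nat set \<Rightarrow> bool" where
  "is_tri V E T \<longleftrightarrow> (\<exists>a b c. T = {a,b,c} \<and> a \<noteq> b \<and> b \<noteq> c \<and> a \<noteq> c \<and> a \<in> V \<and> b \<in> V \<and> c \<in> V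
      \<and> E a b \<and> E b c \<and> E a c)"

definition tris :: "nat set \<Rightarrow> (nat \<Rightarrow> nat \<Rightarrow> bool) \<Rightarrow> nat \<Rightarrow> bool" where
  "tris V E t \<longleftrightarrow> (\<exists>TT. finite TT \<and> card TT = t \<and> (\<forall>T\<in>TT. is_tri V E T)
      \<and> (\<forall>T1\<in>TT. \<forall>T2\<in>TT. T1 \<noteq> T2 \<longrightarrow> T1 \<inter> T2 = {}))"

definition struct :: "nat set \<Rightarrow> (nat \<Rightarrow> nat \<Rightarrow> bool) \<Rightarrow> nat \<Rightarrow> nat \<Rightarrow> bool" where
  "struct V E t n \<longleftrightarrow> V = {..<n} \<and> simple_graph V E \<and> connected_graph V E \<and> tris V E t
     \<and> (\<exists>D. D \<subseteq> V \<and> card D = t \<and> fo (V - D) E)"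

definition gadget :: "nat set \<Rightarrow> (nat \<Rightarrow> nat \<Rightarrow> bool) \<Rightarrow> nat \<Rightarrow> nat \<Rightarrow> nat \<Rightarrow> bool" where
  "gadget B G s n m \<longleftrightarrow> B = {n..<m} \<and> n < m \<and> (\<forall>x y. G x y \<longrightarrow> x \<in> B \<and> y \<in> B)
     \<and> (\<forall>x y. G x y \<longrightarrow> G y x) \<and> (\<forall>x. \<not> G x x) \<and> connected_graph B G \<and> tris B G s
     \<and> (\<exists>D. D \<subseteq> B \<and> card D = s \<and> n \<notin> D \<and> fo (B - D) G)"

definition addE :: "(nat \<Rightarrow> nat \<Rightarrow> bool) \<Rightarrow> (nat \<Rightarrow> nat \<Rightarrow> bool) \<Rightarrow> nat \<Rightarrow> nat \<Rightarrow> nat \<Rightarrow> nat \<Rightarrow> bool" where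
  "addE E G p i x y \<longleftrightarrow> E x y \<or> G x y \<or> (x = p \<and> y = i) \<or> (x = i \<and> y = p)"

lemma conn_glue:
  assumes cA: "connected_graph A E" and cB: "connected_graph B G" and p: "p \<in> A" and i: "i \<in> B"
    and mE: "\<forall>x y. E x y \<longrightarrow> E' x y" and mG: "\<forall>x y. G x y \<longrightarrow> E' x y" and "E' p i" "E' i p"
  shows "connected_graph (A \<union> B) E'"
proof -
  define R where "R = {(u, v). u \<in> A \<union> B \<and> v \<in> A \<union> B \<and> E' u v}"
  have sA: "{(u, v). u \<in> A \<and> v \<in> A \<and> E u v} \<subseteq> R" using mE by (auto simp: R_def)
  have sB: "{(u, v). u \<in> B \<and> v \<in> B \<and> G u v} \<subseteq> R" using mG by (auto simp: R_def)
  have rA: "\<forall>x\<in>A. \<forall>y\<in>A. (x, y) \<in> R\<^sup>*"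
    using cA rtrancl_mono[OF sA] unfolding connected_graph_def by blast
  have rB: "\<forall>x\<in>B. \<forall>y\<in>B. (x, y) \<in> R\<^sup>*"
    using cB rtrancl_mono[OF sB] unfolding connected_graph_def by blast
  have pi: "(p, i) \<in> R\<^sup>*" "(i, p) \<in> R\<^sup>*" using assms(7,8) p i by (auto simp: R_def)
  have "\<forall>x\<in>A \<union> B. \<forall>y\<in>A \<union> B. (x, y) \<in> R\<^sup>*"
  proof (intro ballI)
    fix x y assume x: "x \<in> A \<union> B" and y: "y \<in> A \<union> B"
    show "(x, y) \<in> R\<^sup>*"
    proof (cases "x \<in> A")
      case True
      show ?thesis
      proof (cases "y \<in> A")
        case True thus ?thesis using rA \<open>x \<in> A\<close> by blast
      next
        case False hence "y \<in> B" using y by blast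
        thus ?thesis using rA rB pi p i \<open>x \<in> A\<close> by (meson rtrancl_trans)
      qed
    next
      case False hence xB: "x \<in> B" using x by blast
      show ?thesis
      proof (cases "y \<in> A")
        case True thus ?thesis using rA rB pi p i xB by (meson rtrancl_trans)
      next
        case False hence "y \<in> B" using y by blast
        thus ?thesis using rB xB by blast
      qed
    qed
  qed
  thus ?thesis using cA unfolding connected_graph_def R_def by auto
qed

lemma tri_mono:
  assumes "is_tri V E T" "V \<subseteq> V'" "\<forall>x y. E x y \<longrightarrow> E' x y"
  shows "is_tri V' E' T"
proof -
  obtain a b c where abc: "T = {a,b,c}" "a \<noteq> b" "b \<noteq> c" "a \<noteq> c" "a \<in> V" "b \<in> V" "c \<in> V"
    "E a b" "E b c" "E a c" using assms(1) unfolding is_tri_def by blast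
  have "a \<in> V'" "b \<in> V'" "c \<in> V'" "E' a b" "E' b c" "E' a c" using abc assms(2,3) by blast+
  thus ?thesis unfolding is_tri_def using abc(1-4) by blast
qed

lemma tris_mono:
  assumes "\<forall>T\<in>TT. is_tri V E T" "V \<subseteq> V'" "\<forall>x y. E x y \<longrightarrow> E' x y"
  shows "\<forall>T\<in>TT. is_tri V' E' T"
  using assms tri_mono by blast

lemma is_tri_sub: "is_tri V E T \<Longrightarrow> T \<subseteq> V \<and> T \<noteq> {}"
  unfolding is_tri_def by auto

lemma glue_struct:
  assumes st: "struct V E t n" and p: "p \<in> V" and g: "gadget B G s n m"
  shows "struct {..<m} (addE E G p n) (t + s) m"
proof -
  define E' where "E' = addE E G p n"
  have V: "V = {..<n}" and sg: "simple_graph V E" and cV: "connected_graph V E" and tV: "tris V E t"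
    using st unfolding struct_def by auto
  obtain D where D: "D \<subseteq> V" "card D = t" "fo (V - D) E" using st unfolding struct_def by auto
  have B: "B = {n..<m}" "n < m" and Gin: "\<forall>x y. G x y \<longrightarrow> x \<in> B \<and> y \<in> B"
    and Gsym: "\<forall>x y. G x y \<longrightarrow> G y x" and Girr: "\<forall>x. \<not> G x x" and cB: "connected_graph B G"
    and tB: "tris B G s"
    using g unfolding gadget_def by auto
  obtain DB where DB: "DB \<subseteq> B" "card DB = s" "n \<notin> DB" "fo (B - DB) G" using g unfolding gadget_def by auto
  have Ein: "\<forall>x y. E x y \<longrightarrow> x \<in> V \<and> y \<in> V" and Esym: "\<forall>x y. E x y \<longrightarrow> E y x" and Eirr: "\<forall>x. \<not> E x x"
    using sg unfolding simple_graph_def by auto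
  have pn: "p < n" using p V by auto
  have U: "{..<m} = V \<union> B" using V B by auto
  have dVB: "V \<inter> B = {}" using V B by auto
  have nB: "n \<in> B" using B by auto
  have fV: "finite V" and fB: "finite B" using V B by auto
  have sg': "simple_graph {..<m} E'"
    unfolding simple_graph_def
  proof (intro conjI allI impI)
    show "finite {..<m}" by simp
    have VB: "V \<subseteq> {..<m}" "B \<subseteq> {..<m}" using U by auto
    fix x y
    {
      assume "E' x y"
      hence "E x y \<or> G x y \<or> (x = p \<and> y = n) \<or> (x = n \<and> y = p)" by (simp add: E'_def addE_def)
      thus "x \<in> {..<m}" "y \<in> {..<m}" using Ein Gin VB p nB by blast+
      show "E' y x" using \<open>E' x y\<close> Esym Gsym unfolding E'_def addE_def by blast
    }
    show "\<not> E' x x" using Eirr Girr pn unfolding E'_def addE_def by auto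
  qed
  have cc: "connected_graph {..<m} E'"
    unfolding U by (rule conn_glue[OF cV cB p nB]) (auto simp: E'_def addE_def)
  have tt: "tris {..<m} E' (t + s)"
  proof -
    obtain T1 where T1: "finite T1" "card T1 = t" "\<forall>T\<in>T1. is_tri V E T" "\<forall>X\<in>T1. \<forall>Y\<in>T1. X \<noteq> Y \<longrightarrow> X \<inter> Y = {}"
      using tV unfolding tris_def by auto
    obtain T2 where T2: "finite T2" "card T2 = s" "\<forall>T\<in>T2. is_tri B G T" "\<forall>X\<in>T2. \<forall>Y\<in>T2. X \<noteq> Y \<longrightarrow> X \<inter> Y = {}"
      using tB unfolding tris_def by auto
    have s1: "\<forall>T\<in>T1. T \<subseteq> V \<and> T \<noteq> {}" using T1(3) is_tri_sub by blast
    have s2: "\<forall>T\<in>T2. T \<subseteq> B \<and> T \<noteq> {}" using T2(3) is_tri_sub by blast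
    have d12: "T1 \<inter> T2 = {}"
    proof (rule ccontr)
      assume "T1 \<inter> T2 \<noteq> {}"
      then obtain X where X: "X \<in> T1" "X \<in> T2" by blast
      hence "X \<subseteq> V" "X \<subseteq> B" "X \<noteq> {}" using s1 s2 by blast+
      thus False using dVB by blast
    qed
    have "finite (T1 \<union> T2)" "card (T1 \<union> T2) = t + s" using T1 T2 d12 by (auto simp: card_Un_disjoint)
    moreover have "\<forall>T\<in>T1 \<union> T2. is_tri {..<m} E' T"
    proof -
      have m1: "\<forall>x y. E x y \<longrightarrow> E' x y" "\<forall>x y. G x y \<longrightarrow> E' x y" by (auto simp: E'_def addE_def)
      have "V \<subseteq> {..<m}" "B \<subseteq> {..<m}" using U by auto
      thus ?thesis using tris_mono[OF T1(3) _ m1(1)] tris_mono[OF T2(3) _ m1(2)] by blast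
    qed
    moreover have "\<forall>X\<in>T1 \<union> T2. \<forall>Y\<in>T1 \<union> T2. X \<noteq> Y \<longrightarrow> X \<inter> Y = {}"
    proof (intro ballI impI)
      fix X Y assume X: "X \<in> T1 \<union> T2" and Y: "Y \<in> T1 \<union> T2" and ne: "X \<noteq> Y"
      show "X \<inter> Y = {}"
      proof (cases "X \<in> T1")
        case True
        show ?thesis
        proof (cases "Y \<in> T1")
          case True thus ?thesis using T1(4) \<open>X \<in> T1\<close> ne by blast
        next
          case False hence "Y \<subseteq> B" using Y s2 by blast
          moreover have "X \<subseteq> V" using s1 \<open>X \<in> T1\<close> by blast
          ultimately show ?thesis using dVB by blast
        qed
      next
        case False hence XB: "X \<in> T2" using X by blast
        show ?thesis
        proof (cases "Y \<in> T1")
          case True hence "Y \<subseteq> V" using s1 by blast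
          moreover have "X \<subseteq> B" using s2 XB by blast
          ultimately show ?thesis using dVB by blast
        next
          case False hence "Y \<in> T2" using Y by blast
          thus ?thesis using T2(4) XB ne by blast
        qed
      qed
    qed
    ultimately show ?thesis unfolding tris_def by blast
  qed
  have dd: "\<exists>D'. D' \<subseteq> {..<m} \<and> card D' = t + s \<and> fo ({..<m} - D') E'"
  proof (intro exI conjI)
    show "D \<union> DB \<subseteq> {..<m}" using D DB U by auto
    show "card (D \<union> DB) = t + s" using D DB dVB fV fB
      by (subst card_Un_disjoint) (auto intro: finite_subset)
    show "fo ({..<m} - (D \<union> DB)) E'"
      unfolding fo_def
    proof (intro ballI impI)
      fix v u1 u2 assume v: "v \<in> {..<m} - (D \<union> DB)" and u1: "u1 \<in> {..<m} - (D \<union> DB)"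
        and u2: "u2 \<in> {..<m} - (D \<union> DB)" and e: "E' v u1 \<and> E' v u2 \<and> u1 < v \<and> u2 < v"
      show "u1 = u2"
      proof (cases "v \<in> V")
        case True
        hence vn: "v < n" using V by auto
        have nG: "\<not> G v u" for u using Gin B(1) vn by fastforce
        have "E v u1" "E v u2" using e vn nG by (auto simp: E'_def addE_def)
        moreover have "u1 \<in> V - D" "u2 \<in> V - D" using calculation Ein u1 u2 by auto
        ultimately show ?thesis using D(3) True v e unfolding fo_def by blast
      next
        case False
        hence vB: "v \<in> B" using v U by auto
        have nE: "\<not> E v u" for u using False Ein by blast
        show ?thesis
        proof (cases "v = n")
          case True
          have "u1 \<notin> B" "u2 \<notin> B" using B(1) e True by auto
          hence "\<not> G v u1" "\<not> G v u2" using Gin by blast+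
          hence "u1 = p" "u2 = p" using e nE True pn by (auto simp: E'_def addE_def)
          thus ?thesis by simp
        next
          case False
          have "G v u1" "G v u2" using e nE False pn vB B by (auto simp: E'_def addE_def)
          moreover have "u1 \<in> B - DB" "u2 \<in> B - DB" using calculation Gin u1 u2 by auto
          moreover have "v \<in> B - DB" using vB v by auto
          ultimately show ?thesis using DB(4) e unfolding fo_def by blast
        qed
      qed
    qed
  qed
  show ?thesis unfolding struct_def using sg' cc tt dd E'_def by auto
qed

lemma struct_phi3:
  assumes st: "struct V E t n"
  shows "phi3 V E = t"
proof -
  have V: "V = {..<n}" and sg: "simple_graph V E" and tV: "tris V E t"
    using st unfolding struct_def by auto
  obtain D where D: "D \<subseteq> V" "card D = t" "fo (V - D) E" using st unfolding struct_def by auto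
  have Esym: "\<forall>x y. E x y \<longrightarrow> E y x" and Eirr: "\<forall>x. \<not> E x x"
    using sg unfolding simple_graph_def by auto
  have ex: "\<exists>D. decycling_set3 V E D \<and> card D = t"
  proof (intro exI conjI)
    have "ternary (V - D) E" unfolding ternary_def using fo_no_cycle[OF D(3)] by blast
    thus "decycling_set3 V E D" using D(1) by (simp add: decycling_set3_def)
  qed (rule D(2))
  have lb: "t \<le> k" if exk: "\<exists>D. decycling_set3 V E D \<and> card D = k" for k
  proof -
    obtain D' where D': "D' \<subseteq> V" "ternary (V - D') E" "card D' = k"
      using exk unfolding decycling_set3_def by auto
    obtain TT where TT: "finite TT" "card TT = t" "\<forall>T\<in>TT. is_tri V E T"
      "\<forall>X\<in>TT. \<forall>Y\<in>TT. X \<noteq> Y \<longrightarrow> X \<inter> Y = {}"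
      using tV unfolding tris_def by auto
    have hit: "T \<inter> D' \<noteq> {}" if T: "T \<in> TT" for T
    proof
      assume em: "T \<inter> D' = {}"
      have "is_tri V E T" using TT(3) T by blast
      then obtain a b c where abc: "T = {a,b,c}" "a \<noteq> b" "b \<noteq> c" "a \<noteq> c" "a \<in> V" "b \<in> V" "c \<in> V"
        "E a b" "E b c" "E a c" unfolding is_tri_def by blast
      have "a \<in> T" "b \<in> T" "c \<in> T" using abc(1) by auto
      hence "a \<notin> D'" "b \<notin> D'" "c \<notin> D'" using em by blast+
      hence W: "a \<in> V - D'" "b \<in> V - D'" "c \<in> V - D'" using abc(5,6,7) by blast+
      have "induced_cycle (V - D') E [a,b,c]"
        by (rule tri_cycle[OF abc(2) abc(3) abc(4) W(1) W(2) W(3) abc(8) abc(9) abc(10) Eirr Esym])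
      moreover have "3 dvd length [a,b,c]" by (simp add: eval_nat_numeral)
      ultimately show False using D'(2) unfolding ternary_def by blast
    qed
    define f where "f T = (SOME x. x \<in> T \<inter> D')" for T
    have fT: "f T \<in> T \<inter> D'" if "T \<in> TT" for T
      unfolding f_def by (rule someI_ex) (use hit[OF that] in blast)
    have inj: "inj_on f TT"
    proof (rule inj_onI)
      fix X Y assume XY: "X \<in> TT" "Y \<in> TT" "f X = f Y"
      have "f X \<in> X" using fT[OF XY(1)] by blast
      moreover have "f Y \<in> Y" using fT[OF XY(2)] by blast
      ultimately have "f X \<in> X" "f X \<in> Y" using XY(3) by auto
      hence "X \<inter> Y \<noteq> {}" by blast
      thus "X = Y" using TT(4) \<open>X \<in> TT\<close> \<open>Y \<in> TT\<close> by blast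
    qed
    have "f ` TT \<subseteq> D'" using fT by blast
    moreover have "finite D'" using finite_subset[OF D'(1)] V by simp
    ultimately have "card TT \<le> card D'" by (rule card_inj_on_le[OF inj])
    thus ?thesis using TT D' by simp
  qed
  show ?thesis unfolding phi3_def
  proof (rule Least_equality)
    show "\<exists>D. decycling_set3 V E D \<and> card D = t" by (rule ex)
    fix y assume "\<exists>D. decycling_set3 V E D \<and> card D = y"
    thus "t \<le> y" by (rule lb)
  qed
qed


lemma I_cong_sub:
  assumes "W \<subseteq> V" "\<forall>x\<in>V. \<forall>y\<in>V. E x y = F x y"
  shows "I W E = I W F"
  by (rule indep_cong) (use assms in blast)

lemma st_glue_vals:
  assumes st: "struct V E t n" and p: "p \<in> V" and g: "gadget B G s n m"
  shows "I {..<m} (addE E G p n) = I (V - {p}) E * I B G - (I (V - {p}) E - I V E) * I (B - {n}) G"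
    and "I ({..<m} - {p}) (addE E G p n) = I (V - {p}) E * I B G"
proof -
  define E' where "E' = addE E G p n"
  have V: "V = {..<n}" and sg: "simple_graph V E"
    using st unfolding struct_def by auto
  have B: "B = {n..<m}" "n < m" and Gin: "\<forall>x y. G x y \<longrightarrow> x \<in> B \<and> y \<in> B"
    and Gsym: "\<forall>x y. G x y \<longrightarrow> G y x" and Girr: "\<forall>x. \<not> G x x"
    using g unfolding gadget_def by auto
  have Ein: "\<forall>x y. E x y \<longrightarrow> x \<in> V \<and> y \<in> V" and Esym: "\<forall>x y. E x y \<longrightarrow> E y x" and Eirr: "\<forall>x. \<not> E x x"
    using sg unfolding simple_graph_def by auto
  have pn: "p < n" using p V by auto
  have U: "{..<m} = V \<union> B" using V B by auto
  have dVB: "V \<inter> B = {}" using V B by auto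
  have nB: "n \<in> B" using B by auto
  have pB: "p \<notin> B" using pn B by auto
  have nV: "n \<notin> V" using V by auto
  have fV: "finite V" and fB: "finite B" using V B by auto
  have irr': "\<forall>x. \<not> E' x x" using Eirr Girr pn by (auto simp: E'_def addE_def)
  have sym': "\<forall>x y. E' x y \<longrightarrow> E' y x" using Esym Gsym by (auto simp: E'_def addE_def)
  have cross: "\<forall>x\<in>V. \<forall>y\<in>B. E' x y \<longleftrightarrow> (x = p \<and> y = n)"
  proof (intro ballI)
    fix x y assume x: "x \<in> V" and y: "y \<in> B"
    have "\<not> E x y" using Ein y dVB by blast
    moreover have "\<not> G x y" using Gin x dVB by blast
    moreover have "x \<noteq> n" using x nV by blast
    ultimately show "E' x y \<longleftrightarrow> (x = p \<and> y = n)" by (auto simp: E'_def addE_def)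
  qed
  have cV: "\<forall>x\<in>V. \<forall>y\<in>V. E' x y = E x y"
  proof (intro ballI)
    fix x y assume "x \<in> V" "y \<in> V"
    hence "\<not> G x y" "x \<noteq> n" "y \<noteq> n" using Gin dVB nV by blast+
    thus "E' x y = E x y" by (auto simp: E'_def addE_def)
  qed
  have cB: "\<forall>x\<in>B. \<forall>y\<in>B. E' x y = G x y"
  proof (intro ballI)
    fix x y assume "x \<in> B" "y \<in> B"
    hence "\<not> E x y" "x \<noteq> p" "y \<noteq> p" using Ein dVB pB by blast+
    thus "E' x y = G x y" by (auto simp: E'_def addE_def)
  qed
  have i1: "I V E' = I V E" by (rule I_cong_sub[OF _ cV]) simp
  have i2: "I (V - {p}) E' = I (V - {p}) E" by (rule I_cong_sub[OF _ cV]) blast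
  have i3: "I B E' = I B G" by (rule I_cong_sub[OF _ cB]) simp
  have i4: "I (B - {n}) E' = I (B - {n}) G" by (rule I_cong_sub[OF _ cB]) blast
  note gl = glue_I[OF fV fB dVB p nB irr' sym' cross]
  show "I {..<m} (addE E G p n) = I (V - {p}) E * I B G - (I (V - {p}) E - I V E) * I (B - {n}) G"
    using gl(1) unfolding U E'_def[symmetric] i1 i2 i3 i4 .
  show "I ({..<m} - {p}) (addE E G p n) = I (V - {p}) E * I B G"
    using gl(2) unfolding U E'_def[symmetric] i2 i3 .
qed

lemma conn_center:
  assumes c: "c \<in> B" and h: "\<forall>x\<in>B. x \<noteq> c \<longrightarrow> G c x \<and> G x c"
  shows "connected_graph B G"
proof -
  define R where "R = {(u, v). u \<in> B \<and> v \<in> B \<and> G u v}"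
  have "(x, y) \<in> R\<^sup>*" if "x \<in> B" "y \<in> B" for x y
  proof -
    have "(x, c) \<in> R\<^sup>*" using that h c by (cases "x = c") (auto simp: R_def)
    moreover have "(c, y) \<in> R\<^sup>*" using that h c by (cases "y = c") (auto simp: R_def)
    ultimately show ?thesis by (rule rtrancl_trans)
  qed
  thus ?thesis using c unfolding connected_graph_def R_def by blast
qed

lemma gadget1: "gadget {n} (\<lambda>_ _. False) 0 n (Suc n)"
  unfolding gadget_def
proof (intro conjI)
  show "connected_graph {n} (\<lambda>_ _. False)" by (rule conn_center[of n]) auto
  show "tris {n} (\<lambda>_ _. False) 0" unfolding tris_def by (intro exI[of _ "{}"]) auto
  show "\<exists>D. D \<subseteq> {n} \<and> card D = 0 \<and> n \<notin> D \<and> fo ({n} - D) (\<lambda>_ _. False)"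
    by (intro exI[of _ "{}"]) (auto simp: fo_def)
qed auto

lemma is_triI:
  assumes "a \<noteq> b" "b \<noteq> c" "a \<noteq> c" "a \<in> V" "b \<in> V" "c \<in> V" "E a b" "E b c" "E a c"
  shows "is_tri V E {a,b,c}"
  unfolding is_tri_def using assms by blast

definition triG :: "nat \<Rightarrow> nat \<Rightarrow> nat \<Rightarrow> bool" where
  "triG n x y \<longleftrightarrow> x \<in> {n, Suc n, Suc (Suc n)} \<and> y \<in> {n, Suc n, Suc (Suc n)} \<and> x \<noteq> y"

definition pdG :: "nat \<Rightarrow> nat \<Rightarrow> nat \<Rightarrow> bool" where
  "pdG n x y \<longleftrightarrow> (x = n \<and> y = Suc n) \<or> (x = Suc n \<and> y = n) \<or>
     (x \<in> {Suc n, Suc (Suc n), Suc (Suc (Suc n))} \<and> y \<in> {Suc n, Suc (Suc n), Suc (Suc (Suc n))} \<and> x \<noteq> y)"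

lemma B3: "{n..<n+3} = {n, Suc n, Suc (Suc n)}" by auto
lemma B4: "{n..<n+4} = {n, Suc n, Suc (Suc n), Suc (Suc (Suc n))}" by auto

lemma gadgetT: "gadget {n..<n+3} (triG n) 1 n (n+3)"
  unfolding gadget_def B3
proof (intro conjI)
  show "connected_graph {n, Suc n, Suc (Suc n)} (triG n)" by (rule conn_center[of n]) (auto simp: triG_def)
  show "tris {n, Suc n, Suc (Suc n)} (triG n) 1" unfolding tris_def
  proof (intro exI[of _ "{{n, Suc n, Suc (Suc n)}}"] conjI)
    show "\<forall>T\<in>{{n, Suc n, Suc (Suc n)}}. is_tri {n, Suc n, Suc (Suc n)} (triG n) T"
      using is_triI[of n "Suc n" "Suc (Suc n)" "{n, Suc n, Suc (Suc n)}" "triG n"] by (simp add: triG_def)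
  qed auto
  show "\<exists>D. D \<subseteq> {n, Suc n, Suc (Suc n)} \<and> card D = 1 \<and> n \<notin> D \<and> fo ({n, Suc n, Suc (Suc n)} - D) (triG n)"
    by (intro exI[of _ "{Suc n}"]) (auto simp: fo_def triG_def)
qed (auto simp: triG_def)

lemma gadgetP: "gadget {n..<n+4} (pdG n) 1 n (n+4)"
  unfolding gadget_def B4
proof (intro conjI)
  show "connected_graph {n, Suc n, Suc (Suc n), Suc (Suc (Suc n))} (pdG n)"
    by (rule conn_center[of "Suc n"]) (auto simp: pdG_def)
  show "tris {n, Suc n, Suc (Suc n), Suc (Suc (Suc n))} (pdG n) 1" unfolding tris_def
  proof (intro exI[of _ "{{Suc n, Suc (Suc n), Suc (Suc (Suc n))}}"] conjI)
    show "\<forall>T\<in>{{Suc n, Suc (Suc n), Suc (Suc (Suc n))}}. is_tri {n, Suc n, Suc (Suc n), Suc (Suc (Suc n))} (pdG n) T"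
      using is_triI[of "Suc n" "Suc (Suc n)" "Suc (Suc (Suc n))" "{n, Suc n, Suc (Suc n), Suc (Suc (Suc n))}" "pdG n"]
      by (simp add: pdG_def)
  qed auto
  show "\<exists>D. D \<subseteq> {n, Suc n, Suc (Suc n), Suc (Suc (Suc n))} \<and> card D = 1 \<and> n \<notin> D \<and>
      fo ({n, Suc n, Suc (Suc n), Suc (Suc (Suc n))} - D) (pdG n)"
    by (intro exI[of _ "{Suc (Suc n)}"]) (auto simp: fo_def pdG_def)
qed (auto simp: pdG_def)

lemma I_single: "\<forall>x. \<not> E x x \<Longrightarrow> I {a} E = 0"
  using indep_clique[of "{a}" E] by simp

lemma I_T: "I {n..<n+3} (triG n) = -2" "I ({n..<n+3} - {n}) (triG n) = -1"
proof -
  have irr: "\<forall>x. \<not> triG n x x" by (simp add: triG_def)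
  show "I {n..<n+3} (triG n) = -2" unfolding B3
    using indep_clique[of "{n, Suc n, Suc (Suc n)}" "triG n"] irr by (simp add: triG_def)
  have e: "{n..<n+3} - {n} = {Suc n, Suc (Suc n)}" by auto
  show "I ({n..<n+3} - {n}) (triG n) = -1" unfolding e
    using indep_clique[of "{Suc n, Suc (Suc n)}" "triG n"] irr by (simp add: triG_def)
qed

lemma I_P: "I {n..<n+4} (pdG n) = -1" "I ({n..<n+4} - {n}) (pdG n) = -2"
proof -
  have irr: "\<forall>x. \<not> pdG n x x" by (simp add: pdG_def)
  have sym: "\<forall>x y. pdG n x y \<longrightarrow> pdG n y x" by (auto simp: pdG_def)
  define B' where "B' = {Suc n, Suc (Suc n), Suc (Suc (Suc n))}"
  have e: "{n..<n+4} - {n} = B'" by (auto simp: B'_def)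
  have b2: "I B' (pdG n) = -2" unfolding B'_def
    using indep_clique[of "{Suc n, Suc (Suc n), Suc (Suc (Suc n))}" "pdG n"] irr by (simp add: pdG_def)
  show "I ({n..<n+4} - {n}) (pdG n) = -2" unfolding e by (rule b2)
  have e2: "B' - {Suc n} = {Suc (Suc n), Suc (Suc (Suc n))}" by (auto simp: B'_def)
  have b3: "I (B' - {Suc n}) (pdG n) = -1" unfolding e2
    using indep_clique[of "{Suc (Suc n), Suc (Suc (Suc n))}" "pdG n"] irr by (simp add: pdG_def)
  have u: "{n..<n+4} = {n} \<union> B'" by (auto simp: B'_def)
  have gl: "I ({n} \<union> B') (pdG n) = I ({n} - {n}) (pdG n) * I B' (pdG n)
      - (I ({n} - {n}) (pdG n) - I {n} (pdG n)) * I (B' - {Suc n}) (pdG n)"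
    by (rule glue_I(1)) (use irr sym in \<open>auto simp: B'_def pdG_def\<close>)
  show "I {n..<n+4} (pdG n) = -1" unfolding u gl b2 b3 using I_single[of "pdG n" n] irr
    by (simp add: indep_empty)
qed

definition st :: "nat \<Rightarrow> int \<Rightarrow> int \<Rightarrow> bool" where
  "st t Q P \<longleftrightarrow> (\<exists>V E n p. struct V E t n \<and> p \<in> V \<and> I V E = Q \<and> I (V - {p}) E = P)"

lemma st_base: "st 0 0 1"
proof -
  have s: "struct {..<1} (\<lambda>_ _. False) 0 1"
    unfolding struct_def
  proof (intro conjI)
    show "simple_graph {..<1::nat} (\<lambda>_ _. False)" by (simp add: simple_graph_def)
    show "connected_graph {..<1::nat} (\<lambda>_ _. False)" by (rule conn_center[of 0]) auto
    show "tris {..<1} (\<lambda>_ _. False) 0" unfolding tris_def by (intro exI[of _ "{}"]) auto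
    show "\<exists>D. D \<subseteq> {..<1} \<and> card D = 0 \<and> fo ({..<1} - D) (\<lambda>_ _. False)"
      by (intro exI[of _ "{}"]) (auto simp: fo_def)
  qed simp
  have "{..<1::nat} = {0}" by auto
  hence "I {..<1} (\<lambda>_ _. False) = 0" "I ({..<1} - {0}) (\<lambda>_ _. False) = 1"
    using I_single[of "\<lambda>_ _. False" 0] by (auto simp: indep_empty)
  thus ?thesis unfolding st_def using s by blast
qed

lemma st_E1: assumes "st t Q P" shows "st t (Q - P) Q"
proof -
  obtain V E n p where h: "struct V E t n" "p \<in> V" "I V E = Q" "I (V - {p}) E = P"
    using assms unfolding st_def by blast
  note g = gadget1[of n]
  have s: "struct {..<Suc n} (addE E (\<lambda>_ _. False) p n) t (Suc n)"
    using glue_struct[OF h(1) h(2) g] by simp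
  have v1: "I {..<Suc n} (addE E (\<lambda>_ _. False) p n) = Q - P"
    using st_glue_vals(1)[OF h(1) h(2) g] h(3,4) I_single[of "\<lambda>_ _. False" n]
    by (simp add: indep_empty)
  have V: "V = {..<n}" using h(1) unfolding struct_def by auto
  have e: "{..<Suc n} - {n} = V" using V by auto
  have sg: "simple_graph V E" using h(1) unfolding struct_def by auto
  have cg: "\<forall>x\<in>V. \<forall>y\<in>V. addE E (\<lambda>_ _. False) p n x y = E x y"
    using V by (auto simp: addE_def)
  have "I V (addE E (\<lambda>_ _. False) p n) = I V E" by (rule I_cong_sub[OF order_refl cg])
  hence v2: "I ({..<Suc n} - {n}) (addE E (\<lambda>_ _. False) p n) = Q"
    unfolding e using h(3) by simp
  show ?thesis unfolding st_def using s v1 v2 by blast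
qed

lemma st_T: assumes "st t Q P" shows "st (Suc t) (- Q - P) (- 2 * P)"
proof -
  obtain V E n p where h: "struct V E t n" "p \<in> V" "I V E = Q" "I (V - {p}) E = P"
    using assms unfolding st_def by blast
  note g = gadgetT[of n]
  have s: "struct {..<n+3} (addE E (triG n) p n) (Suc t) (n+3)"
    using glue_struct[OF h(1) h(2) g] by simp
  have v1: "I {..<n+3} (addE E (triG n) p n) = - Q - P"
    using st_glue_vals(1)[OF h(1) h(2) g] h(3,4) I_T by (simp add: algebra_simps)
  have v2: "I ({..<n+3} - {p}) (addE E (triG n) p n) = - 2 * P"
    using st_glue_vals(2)[OF h(1) h(2) g] h(3,4) I_T by (simp add: algebra_simps)
  have "p \<in> {..<n+3}" using h(1,2) unfolding struct_def by auto
  thus ?thesis unfolding st_def using s v1 v2 by blast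
qed

lemma st_P: assumes "st t Q P" shows "st (Suc t) (P - 2 * Q) (- P)"
proof -
  obtain V E n p where h: "struct V E t n" "p \<in> V" "I V E = Q" "I (V - {p}) E = P"
    using assms unfolding st_def by blast
  note g = gadgetP[of n]
  have s: "struct {..<n+4} (addE E (pdG n) p n) (Suc t) (n+4)"
    using glue_struct[OF h(1) h(2) g] by simp
  have v1: "I {..<n+4} (addE E (pdG n) p n) = P - 2 * Q"
    using st_glue_vals(1)[OF h(1) h(2) g] h(3,4) I_P by (simp add: algebra_simps)
  have v2: "I ({..<n+4} - {p}) (addE E (pdG n) p n) = - P"
    using st_glue_vals(2)[OF h(1) h(2) g] h(3,4) I_P by (simp add: algebra_simps)
  have "p \<in> {..<n+4}" using h(1,2) unfolding struct_def by auto
  thus ?thesis unfolding st_def using s v1 v2 by blast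
qed


lemma st_cong: "st t a b \<Longrightarrow> a = a' \<Longrightarrow> b = b' \<Longrightarrow> st t a' b'" by simp

lemma st_neg: assumes "st t Q P" shows "st t (- Q) (- P)"
proof -
  have "st t (Q - P - Q) (Q - P)" using st_E1[OF st_E1[OF assms]] by simp
  from st_E1[OF this] show ?thesis by (rule st_cong) simp_all
qed

lemma st_dbl: assumes "st t Q P" shows "st (Suc t) (2 * Q) P"
proof -
  have a: "st (Suc t) (- (Q - P) - Q) (- 2 * Q)" using st_T[OF st_E1[OF assms]] by simp
  have b: "st (Suc t) ((- (Q - P) - Q) - (- 2 * Q) - (- (Q - P) - Q)) ((- (Q - P) - Q) - (- 2 * Q))"
    using st_E1[OF st_E1[OF a]] by simp
  show ?thesis by (rule st_cong[OF b]) (simp_all add: algebra_simps)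
qed

lemma main_ind: "1 \<le> q \<Longrightarrow> q \<le> 2 ^ t \<Longrightarrow> st t q 1 \<and> st t (- q) (- 1)"
proof (induction t arbitrary: q)
  case 0
  hence q: "q = 1" by simp
  have m: "st 0 (-1) (-1)"
    using st_E1[OF st_E1[OF st_base]] by simp
  show ?case using m st_neg[OF m] q by simp
next
  case (Suc t)
  show ?case
  proof (cases "even q")
    case True
    then obtain k where k: "q = 2 * k" by blast
    have "1 \<le> k" "k \<le> 2 ^ t" using Suc.prems k by auto
    from Suc.IH[OF this] have "st t k 1" "st t (- k) (- 1)" by auto
    thus ?thesis using st_dbl k by fastforce
  next
    case False
    then obtain k where k: "q = 2 * k + 1" using oddE by blast
    define M :: int where "M = 2 ^ t"
    have "2 * k + 1 \<le> 2 * M" using Suc.prems(2) k by (simp add: M_def)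
    hence "k + 1 \<le> M" by arith
    moreover have "1 \<le> k + 1" using Suc.prems(1) k by simp
    ultimately have "st t (k + 1) 1" "st t (- (k + 1)) (- 1)" using Suc.IH[of "k + 1"] M_def by auto
    hence "st (Suc t) (1 - 2 * (k + 1)) (- 1)" "st (Suc t) (- 1 - 2 * (- (k + 1))) (- (- 1))"
      using st_P by blast+
    thus ?thesis using k by (auto elim: st_cong)
  qed
qed

lemma st_graph:
  assumes "st k q P"
  shows "\<exists>(V :: nat set) E. simple_graph V E \<and> connected_graph V E \<and>
           phi3 V E = k \<and> indep_poly V E (-1 :: int) = q"
proof -
  obtain V E n p where h: "struct V E k n" "I V E = q"
    using assms unfolding st_def by blast
  thus ?thesis using struct_phi3[OF h(1)] unfolding struct_def by blast
qed

theorem corollary2p2: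
  fixes k :: nat and q :: int
  assumes "k > 0" and "\<bar>q\<bar> \<le> 2 ^ k"
  shows "\<exists>(V :: nat set) E. simple_graph V E \<and> connected_graph V E \<and>
           phi3 V E = k \<and> indep_poly V E (-1 :: int) = q"
proof -
  have "\<exists>P. st k q P"
  proof (cases "q > 0")
    case True thus ?thesis using main_ind[of q k] assms(2) by auto
  next
    case False
    show ?thesis
    proof (cases "q = 0")
      case True
      have "1 \<le> (1::int)" "(1::int) \<le> 2 ^ k" by simp_all
      from main_ind[OF this] have "st k 1 1" by simp
      from st_E1[OF this] show ?thesis using True by auto
    next
      case False
      hence "1 \<le> - q" "- q \<le> 2 ^ k" using \<open>\<not> q > 0\<close> assms(2) by auto
      from main_ind[OF this] show ?thesis by auto
    qed
  qed
  thus ?thesis using st_graph by blast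
qed

end
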